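(* If $q$ is a power of an odd prime, then the graph $G_q$ is isomorphic to an induced subgraph of $ER_q$.
   Context: For a power $q$ of an odd prime, let $A=\{(a,a^2):a\in\mathbb{F}_q\}\subset\mathbb{F}_q^2$. The graph $G_q$ has vertex set $\mathbb{F}_q\times\mathbb{F}_q$, and distinct vertices $(x_1,x_2)$ and $(y_1,y_2)$ are adjacent if and only if $(x_1,x_2)+(y_1,y_2)\in A$ (equivalently $(x_1+y_1)^2=x_2+y_2$); $G_q$ has no loops. $ER_q$ is the graph whose vertices are the points of $PG(2,q)$, i.e. the $1$-dimensional subspaces of $\mathbb{F}_q^3$, where distinct vertices $(x_0,x_1,x_2)$ and $(y_0,y_1,y_2)$ (homogeneous coordinates) are adjacent if and only if $x_0y_0+x_1y_1+x_2y_2=0$. *)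

theory Defs
  imports "HOL-Computational_Algebra.Primes"
begin

text \<open>The finite field F_q is modelled by a finite field type 'a with CARD('a) = q.\<close>

definition parabola :: "('a::field \<times> 'a) set" where
  "parabola = {(a, a^2) | a. True}"

definition Gq_adj :: "('a::field \<times> 'a) \<Rightarrow> ('a \<times> 'a) \<Rightarrow> bool" where
  "Gq_adj x y \<longleftrightarrow> x \<noteq> y \<and> (fst x + fst y, snd x + snd y) \<in> parabola"

definition span1 :: "('a::field \<times> 'a \<times> 'a) \<Rightarrow> ('a \<times> 'a \<times> 'a) set" where
  "span1 v = {(c * fst v, c * fst (snd v), c * snd (snd v)) | c. True}"

definition PG2_points :: "('a::field \<times> 'a \<times> 'a) set set" where
  "PG2_points = {span1 v | v. v \<noteq> (0, 0, 0)}"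

definition dot3 :: "('a::field \<times> 'a \<times> 'a) \<Rightarrow> ('a \<times> 'a \<times> 'a) \<Rightarrow> 'a" where
  "dot3 x y = fst x * fst y + fst (snd x) * fst (snd y) + snd (snd x) * snd (snd y)"

text \<open>Adjacency of ER_q: distinct points whose homogeneous coordinates are orthogonal
  (well defined, so we require it for all vectors of the two subspaces).\<close>
definition ER_adj :: "('a::field \<times> 'a \<times> 'a) set \<Rightarrow> ('a \<times> 'a \<times> 'a) set \<Rightarrow> bool" where
  "ER_adj P Q \<longleftrightarrow> P \<in> PG2_points \<and> Q \<in> PG2_points \<and> P \<noteq> Q \<and>
     (\<forall>x\<in>P. \<forall>y\<in>Q. dot3 x y = 0)"

definition Gq_induced_in_ERq :: "'a::field itself \<Rightarrow> bool" where
  "Gq_induced_in_ERq _ \<longleftrightarrow> (\<exists>f :: 'a \<times> 'a \<Rightarrow> ('a \<times> 'a \<times> 'a) set.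
     inj f \<and> f ` UNIV \<subseteq> PG2_points \<and>
     (\<forall>u v. Gq_adj u v \<longleftrightarrow> ER_adj (f u) (f v)))"

end

theory Submission
  imports Defs "HOL-Number_Theory.Residues"
begin

lemma fiber_le2:
  fixes s :: "'a::{finite,field}"
  shows "card {x. x^2 = s} \<le> 2"
proof -
  show ?thesis
  proof (cases "\<exists>r. r^2 = s")
    case True
    then obtain r where r: "r^2 = s" by blast
    have "{x. x^2 = s} \<subseteq> {r, -r}"
    proof
      fix x assume "x \<in> {x. x^2 = s}"
      hence "x^2 = r^2" using r by simp
      hence "(x - r) * (x + r) = 0" by (simp add: algebra_simps power2_eq_square)
      thus "x \<in> {r, -r}" by (auto simp: eq_neg_iff_add_eq_0)
    qed
    hence "card {x. x^2 = s} \<le> card {r, -r}" by (intro card_mono) auto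
    also have "\<dots> \<le> 2" by (simp add: card_insert_if)
    finally show ?thesis .
  next
    case False thus ?thesis by simp
  qed
qed

lemma sum_two_squares:
  assumes "odd (card (UNIV :: 'a::{finite,field} set))"
  shows "\<exists>a b :: 'a. a^2 + b^2 = -1"
proof (rule ccontr)
  assume na: "\<not> ?thesis"
  define S where "S = range (\<lambda>a::'a. a^2)"
  define T where "T = (\<lambda>s. -1 - s) ` S"
  have "(UNIV::'a set) = (\<Union>s\<in>S. {x. x^2 = s})" by (auto simp: S_def)
  hence "card (UNIV::'a set) \<le> (\<Sum>s\<in>S. card {x. x^2 = s})"
    by (metis card_UN_le finite)
  also have "\<dots> \<le> (\<Sum>s\<in>S. 2)" by (intro sum_mono fiber_le2)
  finally have c1: "card (UNIV::'a set) \<le> 2 * card S" by simp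
  have "inj_on (\<lambda>s::'a. -1 - s) S" by (auto simp: inj_on_def)
  hence cT: "card T = card S" by (simp add: T_def card_image)
  have "S \<inter> T = {}"
  proof (rule ccontr)
    assume "S \<inter> T \<noteq> {}"
    then obtain z where "z \<in> S" "z \<in> T" by blast
    then obtain a b :: 'a where "a^2 = -1 - b^2" unfolding S_def T_def by (auto simp del: diff_minus_eq_add)
    hence "a^2 + b^2 = -1" by (simp add: algebra_simps)
    thus False using na by blast
  qed
  hence "card (S \<union> T) = card S + card T" by (simp add: card_Un_disjoint)
  moreover have "card (S \<union> T) \<le> card (UNIV::'a set)" by (simp add: card_mono)
  ultimately have "card (UNIV::'a set) = 2 * card S" using c1 cT by linarith
  thus False using assms by simp
qed

lemma two_ne_zero_odd:
  assumes "odd (card (UNIV :: 'a::{finite,field} set))"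
  shows "(2::'a) \<noteq> 0"
proof
  assume h: "(2::'a) = 0"
  obtain k where k: "card (UNIV :: 'a set) = 2 * k + 1" using assms oddE by blast
  have "of_nat (card (UNIV :: 'a set)) = (0::'a)"
    using CHAR_dvd_CARD of_nat_eq_0_iff_char_dvd by blast
  hence "(2::'a) * of_nat k + 1 = 0" unfolding k by (simp add: add.commute)
  thus False using h by simp
qed

lemma dot3_span1:
  "(\<forall>x\<in>span1 v. \<forall>y\<in>span1 w. dot3 x y = 0) \<longleftrightarrow> dot3 v w = (0::'a::field)"
proof
  assume "\<forall>x\<in>span1 v. \<forall>y\<in>span1 w. dot3 x y = 0"
  moreover have "v \<in> span1 v" "w \<in> span1 w"
    unfolding span1_def by (auto intro!: exI[of _ 1])
  ultimately show "dot3 v w = 0" by blast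
next
  assume h: "dot3 v w = 0"
  { fix c d :: 'a
    have "dot3 (c * fst v, c * fst (snd v), c * snd (snd v)) (d * fst w, d * fst (snd w), d * snd (snd w))
      = c * d * dot3 v w" by (simp add: dot3_def algebra_simps)
    hence "dot3 (c * fst v, c * fst (snd v), c * snd (snd v)) (d * fst w, d * fst (snd w), d * snd (snd w)) = 0"
      using h by simp }
  thus "\<forall>x\<in>span1 v. \<forall>y\<in>span1 w. dot3 x y = 0" unfolding span1_def by auto
qed

lemma span1_eq:
  assumes "span1 v = span1 (w::'a::field \<times> 'a \<times> 'a)"
  shows "\<exists>c. v = (c * fst w, c * fst (snd w), c * snd (snd w))"
proof -
  have "v \<in> span1 v" unfolding span1_def by (auto intro!: exI[of _ 1])
  thus ?thesis using assms unfolding span1_def by auto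
qed

theorem theorem1p4:
  fixes p n :: nat and F :: "'a::{finite,field} itself"
  assumes "prime p" and "odd p" and "n \<ge> 1"
    and "card (UNIV :: 'a set) = p ^ n"
  shows "Gq_induced_in_ERq TYPE('a)"
proof -
  have odd: "odd (card (UNIV :: 'a set))" using assms by simp
  obtain a b :: 'a where ab: "a^2 + b^2 = -1" using sum_two_squares[OF odd] by blast
  have two: "(2::'a) \<noteq> 0" using two_ne_zero_odd[OF odd] .
  define h :: 'a where "h = inverse 2"
  have h2: "2 * h = 1" using two by (simp add: h_def)
  define e where "e = (a, b, 1::'a)"
  define f where "f = (- h * a, - h * b, h)"
  define g where "g = (b, - a, 0::'a)"
  define lc where "lc = (\<lambda>(\<alpha>::'a) \<beta> \<gamma>. (\<alpha> * fst e + \<beta> * fst f + \<gamma> * fst g,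
       \<alpha> * fst (snd e) + \<beta> * fst (snd f) + \<gamma> * fst (snd g),
       \<alpha> * snd (snd e) + \<beta> * snd (snd f) + \<gamma> * snd (snd g)))"
  define \<psi> where "\<psi> = (\<lambda>u::'a\<times>'a. lc 1 (- h * (fst u ^ 2 - snd u)) (fst u))"
  have ee: "dot3 e e = 0" using ab by (simp add: e_def dot3_def power2_eq_square)
  have ef: "dot3 e f = 1"
  proof -
    have "dot3 e f = - h * (a^2 + b^2) + h" by (simp add: e_def f_def dot3_def algebra_simps power2_eq_square)
    also have "\<dots> = 2 * h" using ab by simp
    finally show ?thesis using h2 by simp
  qed
  have ff: "dot3 f f = 0"
  proof -
    have "dot3 f f = h*h * (a^2 + b^2) + h*h" by (simp add: f_def dot3_def algebra_simps power2_eq_square)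
    thus ?thesis using ab by simp
  qed
  have eg: "dot3 e g = 0" by (simp add: e_def g_def dot3_def algebra_simps)
  have fg: "dot3 f g = 0" by (simp add: f_def g_def dot3_def algebra_simps)
  have gg: "dot3 g g = -1" using ab by (simp add: g_def dot3_def power2_eq_square add.commute)
  have dlin: "dot3 (lc \<alpha> \<beta> \<gamma>) (lc \<alpha>' \<beta>' \<gamma>') =
      \<alpha>*\<alpha>' * dot3 e e + (\<alpha>*\<beta>' + \<beta>*\<alpha>') * dot3 e f + (\<alpha>*\<gamma>' + \<gamma>*\<alpha>') * dot3 e g
      + \<beta>*\<beta>' * dot3 f f + (\<beta>*\<gamma>' + \<gamma>*\<beta>') * dot3 f g + \<gamma>*\<gamma>' * dot3 g g" for \<alpha> \<beta> \<gamma> \<alpha>' \<beta>' \<gamma>'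
    by (simp add: lc_def dot3_def algebra_simps)
  have dl: "dot3 (lc \<alpha> \<beta> \<gamma>) (lc \<alpha>' \<beta>' \<gamma>') = \<alpha>*\<beta>' + \<beta>*\<alpha>' - \<gamma>*\<gamma>'" for \<alpha> \<beta> \<gamma> \<alpha>' \<beta>' \<gamma>'
    unfolding dlin ee ef ff eg fg gg by simp
  have lscale: "(c * fst (lc \<alpha> \<beta> \<gamma>), c * fst (snd (lc \<alpha> \<beta> \<gamma>)), c * snd (snd (lc \<alpha> \<beta> \<gamma>)))
      = lc (c*\<alpha>) (c*\<beta>) (c*\<gamma>)" for c \<alpha> \<beta> \<gamma>
    by (simp add: lc_def algebra_simps)
  have lcf: "dot3 (lc \<alpha> \<beta> \<gamma>) f = \<alpha>" for \<alpha> \<beta> \<gamma>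
  proof -
    have "f = lc 0 1 0" by (simp add: lc_def)
    thus ?thesis using dl[of \<alpha> \<beta> \<gamma> 0 1 0] by simp
  qed
  have lce: "dot3 (lc \<alpha> \<beta> \<gamma>) e = \<beta>" for \<alpha> \<beta> \<gamma>
  proof -
    have "e = lc 1 0 0" by (simp add: lc_def)
    thus ?thesis using dl[of \<alpha> \<beta> \<gamma> 1 0 0] by simp
  qed
  have lcg: "dot3 (lc \<alpha> \<beta> \<gamma>) g = - \<gamma>" for \<alpha> \<beta> \<gamma>
  proof -
    have "g = lc 0 0 1" by (simp add: lc_def)
    thus ?thesis using dl[of \<alpha> \<beta> \<gamma> 0 0 1] by simp
  qed
  have lc_inj: "lc \<alpha> \<beta> \<gamma> = lc \<alpha>' \<beta>' \<gamma>' \<Longrightarrow> \<alpha> = \<alpha>' \<and> \<beta> = \<beta>' \<and> \<gamma> = \<gamma>'" for \<alpha> \<beta> \<gamma> \<alpha>' \<beta>' \<gamma>'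
    using lcf lce lcg by (metis neg_equal_iff_equal)
  have psi_nz: "\<psi> u \<noteq> (0,0,0)" for u
  proof
    assume "\<psi> u = (0,0,0)"
    hence "dot3 (\<psi> u) f = 0" by (simp add: dot3_def)
    thus False using lcf by (simp add: \<psi>_def)
  qed
  define F where "F = (\<lambda>u. span1 (\<psi> u))"
  have inj: "inj F"
  proof (rule injI)
    fix u v assume "F u = F v"
    then obtain c where c: "\<psi> u = (c * fst (\<psi> v), c * fst (snd (\<psi> v)), c * snd (snd (\<psi> v)))"
      using span1_eq unfolding F_def by blast
    hence "lc 1 (- h * (fst u ^ 2 - snd u)) (fst u) = lc c (c * (- h * (fst v ^ 2 - snd v))) (c * fst v)"
      unfolding \<psi>_def lscale by simp
    from lc_inj[OF this] have "c = 1" "fst u = fst v"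
      "h * (fst u ^ 2 - snd u) = h * (fst v ^ 2 - snd v)" by auto
    moreover have "h \<noteq> 0" using h2 by auto
    ultimately have "fst u = fst v" "snd u = snd v" by auto
    thus "u = v" by (simp add: prod_eq_iff)
  qed
  have pts: "F u \<in> PG2_points" for u
    using psi_nz unfolding F_def PG2_points_def by blast
  have key: "dot3 (\<psi> u) (\<psi> v) = 0 \<longleftrightarrow> (fst u + fst v)^2 = snd u + snd v" for u v
  proof -
    have "dot3 (\<psi> u) (\<psi> v) = - h * ((fst u + fst v)^2 - (snd u + snd v))"
    proof -
      have "dot3 (\<psi> u) (\<psi> v) = - h * (fst v ^ 2 - snd v) - h * (fst u ^ 2 - snd u) - fst u * fst v"
        unfolding \<psi>_def dl by simp
      also have "\<dots> = - h * ((fst u + fst v)^2 - (snd u + snd v))"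
        using h2 by (simp add: algebra_simps power2_eq_square)
      finally show ?thesis .
    qed
    moreover have "h \<noteq> 0" using h2 by auto
    ultimately show ?thesis by simp
  qed
  have adj: "Gq_adj u v \<longleftrightarrow> ER_adj (F u) (F v)" for u v
  proof -
    have "(fst u + fst v, snd u + snd v) \<in> parabola \<longleftrightarrow> (fst u + fst v)^2 = snd u + snd v"
      unfolding parabola_def by auto
    moreover have "F u \<noteq> F v \<longleftrightarrow> u \<noteq> v" using inj by (meson injD)
    ultimately show ?thesis
      unfolding Gq_adj_def ER_adj_def using pts key dot3_span1 unfolding F_def by metis
  qed
  show ?thesis unfolding Gq_induced_in_ERq_def
    using inj pts adj by blast
qed

end
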